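(* Let $\mathcal E$ be an exchangeability system for a noncommutative probability space $(\mathcal A,\phi)$ and let $(X_i)_{i=1}^n$ and $(Y_i)_{i=1}^n$ be $\mathcal E$-independent families in $\mathcal A$. Then $K_n(X_1+Y_1,\dots,X_n+Y_n)=K_n(X_1,\dots,X_n)+K_n(Y_1,\dots,Y_n)$.
   Context: A noncommutative probability space is a pair $(\mathcal A,\phi)$ of a complex unital algebra $\mathcal A$ and a unital linear functional $\phi$. An exchangeability system $\mathcal E$ for $(\mathcal A,\phi)$ consists of a noncommutative probability space $(\mathcal U,\tilde\phi)$ and a family $(\iota_k)_{k\in\mathbb N}$ of embeddings (injective unital algebra homomorphisms) $\iota_k:\mathcal A\to\mathcal A_k\subseteq\mathcal U$ with $\tilde\phi\circ\iota_k=\phi$; write $X^{(k)}=\iota_k(X)$. It is required that for all $X_1,\dots,X_n\in\mathcal A$, all indices $i_1,\dots,i_n\in\mathbb N$ and every bijection $\sigma$ of $\mathbb N$, $\tilde\phi(X_1^{(i_1)}\cdots X_n^{(i_n)})=\tilde\phi(X_1^{(\sigma(i_1))}\cdots X_n^{(\sigma(i_n))})$; this value depends only on the kernel of $j\mapsto i_j$ (partition of $[n]$ into level sets) and for a partition $\pi$ of $[n]$ it is denoted $\phi_\pi(X_1,\dots,X_n)$. For a primitive $n$-th root of unity $\omega$ put $X_j^\omega=\sum_{k=1}^n\omega^kX_j^{(k)}$ and $K_n(X_1,\dots,X_n)=\frac1n\tilde\phi(X_1^\omega\cdots X_n^\omega)$. Subalgebras $\mathcal B,\mathcal C\subseteq\mathcal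 A$ are $\mathcal E$-independent if for all $X_1,\dots,X_n\in\mathcal B\cup\mathcal C$ and every decomposition $[n]=I\sqcup J$ with $X_i\in\mathcal B$ for $i\in I$, $X_i\in\mathcal C$ for $i\in J$, one has $\phi_\pi(X_1,\dots,X_n)=\phi_{\pi'}(X_1,\dots,X_n)$ whenever $\pi|_I=\pi'|_I$ and $\pi|_J=\pi'|_J$. Two families are $\mathcal E$-independent if the subalgebras they generate are. *)

theory Defs
  imports "HOL-Analysis.Analysis" "HOL-Library.Disjoint_Sets"
begin

class complex_algebra_1 = ring_1 +
  fixes scaleC :: "complex \<Rightarrow> 'a \<Rightarrow> 'a"
  assumes scaleC_add_right: "scaleC a (x + y) = scaleC a x + scaleC a y"
    and scaleC_add_left: "scaleC (a + b) x = scaleC a x + scaleC b x"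
    and scaleC_scaleC: "scaleC a (scaleC b x) = scaleC (a * b) x"
    and scaleC_one: "scaleC 1 x = x"
    and mult_scaleC_left: "scaleC a x * y = scaleC a (x * y)"
    and mult_scaleC_right: "x * scaleC a y = scaleC a (x * y)"

definition ncps :: "('a::complex_algebra_1 \<Rightarrow> complex) \<Rightarrow> bool" where
  "ncps phi \<longleftrightarrow> (\<forall>x y. phi (x + y) = phi x + phi y)
      \<and> (\<forall>c x. phi (scaleC c x) = c * phi x) \<and> phi 1 = 1"

definition embedding :: "('a::complex_algebra_1 \<Rightarrow> 'u::complex_algebra_1) \<Rightarrow> bool" where
  "embedding f \<longleftrightarrow> inj f \<and> f 1 = 1 \<and> (\<forall>x y. f (x + y) = f x + f y)
      \<and> (\<forall>x y. f (x * y) = f x * f y) \<and> (\<forall>c x. f (scaleC c x) = scaleC c (f x))"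

text \<open>The word X_1^(i_1) ... X_n^(i_n) (positions indexed 0..n-1, ordered product).\<close>
definition word :: "(nat \<Rightarrow> 'a \<Rightarrow> 'u::complex_algebra_1) \<Rightarrow> nat \<Rightarrow> (nat \<Rightarrow> nat) \<Rightarrow> (nat \<Rightarrow> 'a) \<Rightarrow> 'u" where
  "word \<iota> n i X = prod_list (map (\<lambda>j. \<iota> (i j) (X j)) [0..<n])"

definition exch_system :: "('a::complex_algebra_1 \<Rightarrow> complex) \<Rightarrow> ('u::complex_algebra_1 \<Rightarrow> complex)
    \<Rightarrow> (nat \<Rightarrow> 'a \<Rightarrow> 'u) \<Rightarrow> bool" where
  "exch_system phi phit \<iota> \<longleftrightarrow> ncps phi \<and> ncps phit
     \<and> (\<forall>k. embedding (\<iota> k) \<and> phit \<circ> \<iota> k = phi)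
     \<and> (\<forall>n X i \<sigma>. bij (\<sigma>::nat \<Rightarrow> nat) \<longrightarrow> phit (word \<iota> n i X) = phit (word \<iota> n (\<sigma> \<circ> i) X))"

definition kernel_part :: "nat \<Rightarrow> (nat \<Rightarrow> nat) \<Rightarrow> nat set set" where
  "kernel_part n i = (\<lambda>l. {j \<in> {0..<n}. i j = i l}) ` {0..<n}"

definition phi_pi :: "('u::complex_algebra_1 \<Rightarrow> complex) \<Rightarrow> (nat \<Rightarrow> 'a \<Rightarrow> 'u) \<Rightarrow> nat
    \<Rightarrow> nat set set \<Rightarrow> (nat \<Rightarrow> 'a) \<Rightarrow> complex" where
  "phi_pi phit \<iota> n \<pi> X = phit (word \<iota> n (SOME i. kernel_part n i = \<pi>) X)"

definition restrict_part :: "'b set set \<Rightarrow> 'b set \<Rightarrow> 'b set set" where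
  "restrict_part \<pi> I = {b \<inter> I | b. b \<in> \<pi> \<and> b \<inter> I \<noteq> {}}"

definition E_indep_alg :: "('u::complex_algebra_1 \<Rightarrow> complex) \<Rightarrow> (nat \<Rightarrow> 'a \<Rightarrow> 'u)
    \<Rightarrow> 'a set \<Rightarrow> 'a set \<Rightarrow> bool" where
  "E_indep_alg phit \<iota> B C \<longleftrightarrow>
     (\<forall>n X I J. I \<union> J = {0..<n} \<and> I \<inter> J = {} \<and> (\<forall>j\<in>I. X j \<in> B) \<and> (\<forall>j\<in>J. X j \<in> C) \<longrightarrow>
        (\<forall>\<pi> \<pi>'. partition_on {0..<n} \<pi> \<and> partition_on {0..<n} \<pi>'
            \<and> restrict_part \<pi> I = restrict_part \<pi>' I \<and> restrict_part \<pi> J = restrict_part \<pi>' J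
            \<longrightarrow> phi_pi phit \<iota> n \<pi> X = phi_pi phit \<iota> n \<pi>' X))"

definition subalg_gen :: "'a::complex_algebra_1 set \<Rightarrow> 'a set" where
  "subalg_gen S = \<Inter>{B. S \<subseteq> B \<and> 1 \<in> B \<and> (\<forall>x\<in>B. \<forall>y\<in>B. x + y \<in> B \<and> x * y \<in> B)
                      \<and> (\<forall>c. \<forall>x\<in>B. scaleC c x \<in> B)}"

definition E_indep_fam :: "('u::complex_algebra_1 \<Rightarrow> complex) \<Rightarrow> (nat \<Rightarrow> 'a \<Rightarrow> 'u)
    \<Rightarrow> nat \<Rightarrow> (nat \<Rightarrow> 'a::complex_algebra_1) \<Rightarrow> (nat \<Rightarrow> 'a) \<Rightarrow> bool" where
  "E_indep_fam phit \<iota> n X Y \<longleftrightarrow>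
     E_indep_alg phit \<iota> (subalg_gen (X ` {0..<n})) (subalg_gen (Y ` {0..<n}))"

definition primitive_root :: "nat \<Rightarrow> complex \<Rightarrow> bool" where
  "primitive_root n \<omega> \<longleftrightarrow> 0 < n \<and> \<omega> ^ n = 1 \<and> (\<forall>m. 0 < m \<and> m < n \<longrightarrow> \<omega> ^ m \<noteq> 1)"

definition X_omega :: "(nat \<Rightarrow> 'a \<Rightarrow> 'u::complex_algebra_1) \<Rightarrow> nat \<Rightarrow> complex \<Rightarrow> 'a \<Rightarrow> 'u" where
  "X_omega \<iota> n \<omega> x = (\<Sum>k=1..n. scaleC (\<omega> ^ k) (\<iota> k x))"

definition K :: "('u::complex_algebra_1 \<Rightarrow> complex) \<Rightarrow> (nat \<Rightarrow> 'a \<Rightarrow> 'u) \<Rightarrow> nat \<Rightarrow> complex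
    \<Rightarrow> (nat \<Rightarrow> 'a) \<Rightarrow> complex" where
  "K phit \<iota> n \<omega> X = (1 / of_nat n) * phit (prod_list (map (\<lambda>j. X_omega \<iota> n \<omega> (X j)) [0..<n]))"

end

theory Submission
  imports Defs
begin


lemma scaleC_zero_right: "scaleC a (0::'u::complex_algebra_1) = 0"
proof -
  have "scaleC a (0::'u) + scaleC a 0 = scaleC a 0 + 0"
    by (metis scaleC_add_right add_0_right)
  then show ?thesis by simp
qed

lemma scaleC_sum: "scaleC a (sum (f :: 'b \<Rightarrow> 'u::complex_algebra_1) A) = (\<Sum>x\<in>A. scaleC a (f x))"
  by (induction A rule: infinite_finite_induct) (auto simp: scaleC_zero_right scaleC_add_right)

lemma ncps_zero: assumes "ncps phit" shows "phit 0 = 0"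
proof -
  have "phit (0 + 0) = phit 0 + phit 0" using assms unfolding ncps_def by blast
  then show ?thesis by simp
qed

lemma ncps_sum: assumes "ncps phit" shows "phit (sum f A) = (\<Sum>x\<in>A. phit (f x))"
  using assms by (induction A rule: infinite_finite_induct) (auto simp: ncps_zero ncps_def)

lemma ncps_scaleC: assumes "ncps phit" shows "phit (scaleC c x) = c * phit x"
  using assms by (simp add: ncps_def)

lemma scaleC_mult_scaleC: "scaleC a (x::'u::complex_algebra_1) * scaleC b y = scaleC (a * b) (x * y)"
  by (simp add: mult_scaleC_left mult_scaleC_right scaleC_scaleC) (simp add: mult.commute)

lemma prod_list_add_expand:
  fixes f g :: "nat \<Rightarrow> 'a::ring_1"
  shows "prod_list (map (\<lambda>j. f j + g j) [0..<n]) =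
    (\<Sum>S\<in>Pow {0..<n}. prod_list (map (\<lambda>j. if j \<in> S then f j else g j) [0..<n]))"
proof (induction n)
  case 0
  then show ?case by simp
next
  case (Suc n)
  let ?P = "\<lambda>S. prod_list (map (\<lambda>j. if j \<in> S then f j else g j) [0..<n])"
  have e1: "prod_list (map (\<lambda>j. if j \<in> S then f j else g j) [0..<Suc n]) = ?P S * g n"
    if "S \<in> Pow {0..<n}" for S using that by auto
  have e2: "prod_list (map (\<lambda>j. if j \<in> insert n S then f j else g j) [0..<Suc n]) = ?P S * f n"
    if "S \<in> Pow {0..<n}" for S
  proof -
    have m: "map (\<lambda>j. if j \<in> insert n S then f j else g j) [0..<n] = map (\<lambda>j. if j \<in> S then f j else g j) [0..<n]"
      by (rule map_cong) auto
    have "prod_list (map (\<lambda>j. if j \<in> insert n S then f j else g j) [0..<Suc n]) = prod_list (map (\<lambda>j. if j \<in> insert n S then f j else g j) [0..<n]) * f n"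
      by simp
    then show ?thesis by (simp only: m)
  qed
  have inj: "inj_on (insert n) (Pow {0..<n})"
    by (rule inj_onI) (metis PowD atLeastLessThan_iff insert_ident less_irrefl subsetD)
  have disj: "Pow {0..<n} \<inter> insert n ` Pow {0..<n} = {}" by auto
  have "(\<Sum>S\<in>Pow {0..<Suc n}. prod_list (map (\<lambda>j. if j \<in> S then f j else g j) [0..<Suc n]))
     = (\<Sum>S\<in>Pow {0..<n}. prod_list (map (\<lambda>j. if j \<in> S then f j else g j) [0..<Suc n]))
      + (\<Sum>S\<in>insert n ` Pow {0..<n}. prod_list (map (\<lambda>j. if j \<in> S then f j else g j) [0..<Suc n]))"
    unfolding atLeast0_lessThan_Suc Pow_insert by (rule sum.union_disjoint) (use disj in auto)
  also have "\<dots> = (\<Sum>S\<in>Pow {0..<n}. ?P S * g n) + (\<Sum>S\<in>Pow {0..<n}. ?P S * f n)"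
    apply (subst sum.reindex[OF inj])
    apply (unfold o_def)
    apply (intro arg_cong2[where f="(+)"] sum.cong refl)
    using e1 e2 by blast+
  also have "\<dots> = prod_list (map (\<lambda>j. f j + g j) [0..<n]) * (f n + g n)"
    by (simp add: Suc.IH sum_distrib_right distrib_left add.commute)
  finally show ?case by simp
qed

lemma prod_list_sum_PiE:
  fixes c :: "nat \<Rightarrow> 'k \<Rightarrow> complex" and u :: "nat \<Rightarrow> 'k \<Rightarrow> 'u::complex_algebra_1"
  assumes "finite KK"
  shows "prod_list (map (\<lambda>j. \<Sum>k\<in>KK. scaleC (c j k) (u j k)) [0..<n]) =
    (\<Sum>i\<in>PiE {0..<n} (\<lambda>_. KK). scaleC (\<Prod>j<n. c j (i j)) (prod_list (map (\<lambda>j. u j (i j)) [0..<n])))"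
proof (induction n)
  case 0
  then show ?case by (simp add: scaleC_one)
next
  case (Suc n)
  let ?P = "PiE {0..<n} (\<lambda>_. KK)"
  let ?T = "\<lambda>i. scaleC (\<Prod>j<n. c j (i j)) (prod_list (map (\<lambda>j. u j (i j)) [0..<n]))"
  have "prod_list (map (\<lambda>j. \<Sum>k\<in>KK. scaleC (c j k) (u j k)) [0..<Suc n])
      = (\<Sum>i\<in>?P. ?T i) * (\<Sum>k\<in>KK. scaleC (c n k) (u n k))"
    using Suc.IH by simp
  also have "\<dots> = (\<Sum>i\<in>?P. \<Sum>k\<in>KK. scaleC ((\<Prod>j<n. c j (i j)) * c n k)
         (prod_list (map (\<lambda>j. u j (i j)) [0..<n]) * u n k))"
    apply (simp only: sum_distrib_right)
    apply (simp only: sum_distrib_left)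
    by (simp only: scaleC_mult_scaleC)
  also have "\<dots> = (\<Sum>(k,i)\<in>KK \<times> ?P. scaleC ((\<Prod>j<n. c j (i j)) * c n k)
         (prod_list (map (\<lambda>j. u j (i j)) [0..<n]) * u n k))"
    unfolding sum.cartesian_product[symmetric] by (rule sum.swap)
  also have "\<dots> = (\<Sum>(k,i)\<in>KK \<times> ?P. scaleC (\<Prod>j<Suc n. c j ((i(n:=k)) j))
         (prod_list (map (\<lambda>j. u j ((i(n:=k)) j)) [0..<Suc n])))"
  proof (rule sum.cong[OF refl], clarify)
    fix k i
    have a: "(\<Prod>j<n. c j ((i(n:=k)) j)) = (\<Prod>j<n. c j (i j))" by (rule prod.cong) auto
    have b: "map (\<lambda>j. u j ((i(n:=k)) j)) [0..<n] = map (\<lambda>j. u j (i j)) [0..<n]" by (rule map_cong) auto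
    have b': "map (\<lambda>j. u j (if j = n then k else i j)) [0..<n] = map (\<lambda>j. u j (i j)) [0..<n]" by (rule map_cong) auto
    show "scaleC ((\<Prod>j<n. c j (i j)) * c n k) (prod_list (map (\<lambda>j. u j (i j)) [0..<n]) * u n k) =
          scaleC (\<Prod>j<Suc n. c j ((i(n:=k)) j)) (prod_list (map (\<lambda>j. u j ((i(n:=k)) j)) [0..<Suc n]))"
    proof -
      have p1: "prod_list (map (\<lambda>j. u j ((i(n:=k)) j)) [0..<Suc n]) = prod_list (map (\<lambda>j. u j ((i(n:=k)) j)) [0..<n]) * u n k"
        by simp
      have p2: "(\<Prod>j<Suc n. c j ((i(n:=k)) j)) = (\<Prod>j<n. c j ((i(n:=k)) j)) * c n k"
        by simp
      show ?thesis unfolding p1 p2 a b ..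
    qed
  qed
  also have "\<dots> = (\<Sum>i\<in>PiE {0..<Suc n} (\<lambda>_. KK). scaleC (\<Prod>j<Suc n. c j (i j)) (prod_list (map (\<lambda>j. u j (i j)) [0..<Suc n])))"
    unfolding atLeast0_lessThan_Suc PiE_insert_eq
    apply (subst sum.reindex[OF inj_combinator])
     apply simp
    apply (unfold o_def)
    apply (rule sum.cong[OF refl])
    apply (simp add: split_beta)
    done
  finally show ?case .
qed


lemma kernel_eq:
  assumes "kernel_part n i = kernel_part n i'" "j < n" "l < n"
  shows "i j = i l \<longleftrightarrow> i' j = i' l"
proof -
  have "{j \<in> {0..<n}. i j = i l} \<in> kernel_part n i"
    unfolding kernel_part_def by (rule image_eqI[where x=l]) (use assms(3) in simp_all)
  then have "{j \<in> {0..<n}. i j = i l} \<in> kernel_part n i'" using assms(1) by simp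
  then obtain m where m: "{j \<in> {0..<n}. i j = i l} = {j \<in> {0..<n}. i' j = i' m}" "m \<in> {0..<n}"
    unfolding kernel_part_def by (rule imageE)
  have "l \<in> {j \<in> {0..<n}. i j = i l}" using assms(3) by simp
  then have "l \<in> {j \<in> {0..<n}. i' j = i' m}" unfolding m(1) .
  then have "i' l = i' m" by simp
  then have "{j \<in> {0..<n}. i j = i l} = {j \<in> {0..<n}. i' j = i' l}" using m(1) by simp
  then have "j \<in> {j \<in> {0..<n}. i j = i l} \<longleftrightarrow> j \<in> {j \<in> {0..<n}. i' j = i' l}" by simp
  then show ?thesis using assms(2) by simp
qed

lemma extend_bij:
  fixes i i' :: "nat \<Rightarrow> nat"
  assumes "\<forall>j<n. \<forall>l<n. i j = i l \<longleftrightarrow> i' j = i' l"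
  shows "\<exists>\<sigma>. bij \<sigma> \<and> (\<forall>j<n. \<sigma> (i j) = i' j)"
proof -
  define A where "A = i ` {0..<n}"
  define B where "B = i' ` {0..<n}"
  define f where "f = (\<lambda>a. i' (inv_into {0..<n} i a))"
  have fi: "f (i j) = i' j" if "j < n" for j
  proof -
    have ij: "i j \<in> i ` {0..<n}" using that by simp
    define j' where "j' = inv_into {0..<n} i (i j)"
    have "j' < n" using inv_into_into[OF ij] unfolding j'_def by simp
    moreover have "i j' = i j" using f_inv_into_f[OF ij] unfolding j'_def by simp
    ultimately have "i' j' = i' j" using assms[rule_format, OF \<open>j' < n\<close> that] by simp
    then show ?thesis unfolding f_def j'_def[symmetric] by simp
  qed
  have fb: "bij_betw f A B"
  proof (rule bij_betw_imageI)
    show "inj_on f A"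
    proof (rule inj_onI)
      fix x y assume xy: "x \<in> A" "y \<in> A" "f x = f y"
      then obtain j l where jl: "j < n" "l < n" "x = i j" "y = i l" unfolding A_def by auto
      then have "i' j = i' l" using xy(3) fi by simp
      moreover have "(i j = i l) = (i' j = i' l)" using assms[rule_format, OF jl(1,2)] .
      ultimately show "x = y" using jl by simp
    qed
    have "f ` A = (f \<circ> i) ` {0..<n}" unfolding A_def by (simp add: image_comp)
    also have "\<dots> = i' ` {0..<n}" by (rule image_cong[OF refl]) (simp add: fi)
    finally show "f ` A = B" unfolding B_def .
  qed
  define C where "C = A \<union> B"
  have fin: "finite A" "finite B" "finite C" unfolding A_def B_def C_def by auto
  have cAB: "card A = card B" using fb by (rule bij_betw_same_card)
  have "card (C - A) = card (C - B)"
    using fin cAB unfolding C_def by (simp add: card_Diff_subset)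
  moreover have "finite (C - A)" "finite (C - B)" using fin by auto
  ultimately obtain g where g: "bij_betw g (C - A) (C - B)"
    using finite_same_card_bij[of "C - A" "C - B"] by auto
  have b1: "bij_betw (\<lambda>x. if x \<in> A then f x else g x) (A \<union> (C - A)) (B \<union> (C - B))"
    by (rule bij_betw_disjoint_Un[OF fb g]) blast+
  have b1': "bij_betw (\<lambda>x. if x \<in> A then f x else g x) C C"
  proof -
    have "A \<union> (C - A) = C" "B \<union> (C - B) = C" unfolding C_def by blast+
    then show ?thesis using b1 by simp
  qed
  have b2: "bij_betw (\<lambda>x. if x \<in> C then (if x \<in> A then f x else g x) else id x) (C \<union> (- C)) (C \<union> (- C))"
    by (rule bij_betw_disjoint_Un[OF b1' bij_betw_id]) blast+
  show ?thesis
  proof (intro exI conjI allI impI)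
    show "bij (\<lambda>x. if x \<in> C then (if x \<in> A then f x else g x) else id x)"
      using b2 by simp
    fix j assume j: "j < n"
    then have "i j \<in> A" "i j \<in> C" unfolding C_def A_def by simp_all
    then show "(if i j \<in> C then (if i j \<in> A then f (i j) else g (i j)) else id (i j)) = i' j"
      using fi j by simp
  qed
qed

lemma word_cong:
  assumes "\<And>j. j < n \<Longrightarrow> i j = i' j"
  shows "word \<iota> n i X = word \<iota> n i' X"
proof -
  have m: "map (\<lambda>j. \<iota> (i j) (X j)) [0..<n] = map (\<lambda>j. \<iota> (i' j) (X j)) [0..<n]"
    by (rule map_cong[OF refl]) (simp add: assms)
  show ?thesis unfolding word_def using arg_cong[where f=prod_list, OF m] .
qed

lemma phi_pi_kernel:
  assumes "exch_system phi phit \<iota>"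
  shows "phi_pi phit \<iota> n (kernel_part n i) Z = phit (word \<iota> n i Z)"
proof -
  define i0 where "i0 = (SOME i0. kernel_part n i0 = kernel_part n i)"
  have k: "kernel_part n i0 = kernel_part n i" unfolding i0_def by (rule someI[of "\<lambda>i0. kernel_part n i0 = kernel_part n i" i]) (rule refl)
  have "\<forall>j<n. \<forall>l<n. i j = i l \<longleftrightarrow> i0 j = i0 l" using kernel_eq[OF k[symmetric]] by blast
  then obtain \<sigma> where s: "bij \<sigma>" "\<forall>j<n. \<sigma> (i j) = i0 j" using extend_bij by blast
  have "phit (word \<iota> n i Z) = phit (word \<iota> n (\<sigma> \<circ> i) Z)"
    using assms s(1) unfolding exch_system_def by blast
  also have "\<dots> = phit (word \<iota> n i0 Z)"
    by (rule arg_cong[where f=phit], rule word_cong) (simp add: s(2))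
  finally have f: "phit (word \<iota> n i Z) = phit (word \<iota> n i0 Z)" .
  have e: "phi_pi phit \<iota> n (kernel_part n i) Z = phit (word \<iota> n i0 Z)"
    unfolding phi_pi_def i0_def by (rule refl)
  show ?thesis by (rule trans[OF e f[symmetric]])
qed

lemma partition_kernel: "partition_on {0..<n} (kernel_part n i)"
proof (rule partition_onI)
  show "\<Union> (kernel_part n i) = {0..<n}" unfolding kernel_part_def by auto
  fix p q assume pq: "p \<in> kernel_part n i" "q \<in> kernel_part n i" "p \<noteq> q"
  from pq(1) obtain a where pa: "p = {j \<in> {0..<n}. i j = i a}" "a \<in> {0..<n}"
    unfolding kernel_part_def by (rule imageE)
  from pq(2) obtain b where qb: "q = {j \<in> {0..<n}. i j = i b}" "b \<in> {0..<n}"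
    unfolding kernel_part_def by (rule imageE)
  have "i a \<noteq> i b" using pq(3) pa(1) qb(1) by auto
  then show "disjnt p q" using pa(1) qb(1) unfolding disjnt_def by auto
next
  show "{} \<notin> kernel_part n i" unfolding kernel_part_def by auto
qed

lemma restrict_kernel:
  assumes I: "I \<subseteq> {0..<n}"
  shows "restrict_part (kernel_part n i) I = (\<lambda>l. {j \<in> I. i j = i l}) ` I"
proof (rule set_eqI, rule iffI)
  fix x assume "x \<in> restrict_part (kernel_part n i) I"
  then obtain b where b: "x = b \<inter> I" "b \<in> kernel_part n i" "b \<inter> I \<noteq> {}"
    unfolding restrict_part_def by blast
  from b(2) obtain a where a: "b = {j \<in> {0..<n}. i j = i a}" "a \<in> {0..<n}"
    unfolding kernel_part_def by (rule imageE)
  from b(3) obtain l where l: "l \<in> b" "l \<in> I" by blast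
  have ila: "i l = i a" using l(1) a(1) by simp
  have "x = {j \<in> I. i j = i l}"
  proof (rule set_eqI)
    fix j
    show "j \<in> x \<longleftrightarrow> j \<in> {j \<in> I. i j = i l}"
      unfolding b(1) a(1) using I ila by auto
  qed
  then show "x \<in> (\<lambda>l. {j \<in> I. i j = i l}) ` I" using l(2) by (rule image_eqI)
next
  fix x assume "x \<in> (\<lambda>l. {j \<in> I. i j = i l}) ` I"
  then obtain l where l: "x = {j \<in> I. i j = i l}" "l \<in> I" by (rule imageE)
  define b where "b = {j \<in> {0..<n}. i j = i l}"
  have lb: "l \<in> {0..<n}" using l(2) I by blast
  have "b \<in> kernel_part n i" unfolding kernel_part_def b_def using lb by (rule image_eqI[OF refl])
  moreover have "x = b \<inter> I" unfolding l(1) b_def using I by auto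
  moreover have "b \<inter> I \<noteq> {}" unfolding b_def using l(2) lb by auto
  ultimately show "x \<in> restrict_part (kernel_part n i) I" unfolding restrict_part_def by blast
qed

lemma mixed_zero:
  fixes phit :: "'u::complex_algebra_1 \<Rightarrow> complex" and \<iota> :: "nat \<Rightarrow> 'a::complex_algebra_1 \<Rightarrow> 'u"
  assumes ex: "exch_system phi phit \<iota>" and ind: "E_indep_alg phit \<iota> B C"
    and pr: "primitive_root n \<omega>"
    and S: "S \<subseteq> {0..<n}" "S \<noteq> {}" "S \<noteq> {0..<n}"
    and ZB: "\<forall>j\<in>S. Z j \<in> B" and ZC: "\<forall>j\<in>{0..<n}-S. Z j \<in> C"
  shows "phit (prod_list (map (\<lambda>j. X_omega \<iota> n \<omega> (Z j)) [0..<n])) = 0"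
proof -
  have nc: "ncps phit" using ex unfolding exch_system_def by blast
  have wn: "\<omega> ^ n = 1" using pr unfolding primitive_root_def by blast
  define P where "P = PiE {0..<n} (\<lambda>_. {1..n})"
  have finP: "finite P" unfolding P_def by (simp add: finite_PiE)
  have expd: "prod_list (map (\<lambda>j. X_omega \<iota> n \<omega> (Z j)) [0..<n]) =
      (\<Sum>i\<in>P. scaleC (\<Prod>j<n. \<omega> ^ (i j)) (word \<iota> n i Z))"
    unfolding X_omega_def word_def P_def
    by (rule prod_list_sum_PiE[of "{1..n}" "\<lambda>j k. \<omega> ^ k" "\<lambda>j k. \<iota> k (Z j)" n]) simp
  define F where "F i = (\<Prod>j<n. \<omega> ^ (i j)) * phit (word \<iota> n i Z)" for i
  have main: "phit (prod_list (map (\<lambda>j. X_omega \<iota> n \<omega> (Z j)) [0..<n])) = (\<Sum>i\<in>P. F i)"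
    unfolding expd F_def ncps_sum[OF nc] ncps_scaleC[OF nc] ..
  define sh where "sh v = (if v = n then 1 else Suc v)" for v :: nat
  have shinj: "a = b" if "a \<in> {1..n}" "b \<in> {1..n}" "sh a = sh b" for a b
    using that unfolding sh_def by (cases "a = n"; cases "b = n") auto
  have shr: "sh a \<in> {1..n}" if "a \<in> {1..n}" for a
    using that unfolding sh_def by auto
  have shw: "\<omega> ^ sh a = \<omega> * \<omega> ^ a" if "a \<in> {1..n}" for a
  proof (cases "a = n")
    case True
    then show ?thesis using wn unfolding sh_def by simp
  next
    case False
    then show ?thesis unfolding sh_def by simp
  qed
  define T where "T i = (\<lambda>j. if j \<in> S then sh (i j) else i j)" for i :: "nat \<Rightarrow> nat"
  have Pr: "i j \<in> {1..n}" if "i \<in> P" "j < n" for i j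
    using PiE_mem[of i "{0..<n}" "\<lambda>_. {1..n}" j] that unfolding P_def by simp
  have Pout: "i j = undefined" if "i \<in> P" "j \<notin> {0..<n}" for i j
    using PiE_arb[of i "{0..<n}" "\<lambda>_. {1..n}" j] that unfolding P_def by simp
  have TP: "T ` P \<subseteq> P"
  proof
    fix x assume "x \<in> T ` P"
    then obtain i where i: "i \<in> P" "x = T i" by blast
    have r: "x j \<in> {1..n}" if "j \<in> {0..<n}" for j
    proof (cases "j \<in> S")
      case True
      have "x j = sh (i j)" using True i(2) unfolding T_def by simp
      then show ?thesis using shr[OF Pr[OF i(1)]] that by simp
    next
      case False
      have "x j = i j" using False i(2) unfolding T_def by simp
      then show ?thesis using Pr[OF i(1)] that by simp
    qed
    have e: "x j = undefined" if "j \<notin> {0..<n}" for j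
    proof -
      have "j \<notin> S" using that S(1) by blast
      then have "x j = i j" using i(2) unfolding T_def by simp
      then show ?thesis using Pout[OF i(1) that] by simp
    qed
    show "x \<in> P" unfolding P_def using r e by (intro PiE_I)
  qed
  have Tinj: "inj_on T P"
  proof (rule inj_onI)
    fix i i' assume a: "i \<in> P" "i' \<in> P" "T i = T i'"
    show "i = i'"
    proof
      fix j
      have tj: "T i j = T i' j" using a(3) by simp
      show "i j = i' j"
      proof (cases "j \<in> S")
        case True
        then have "j < n" using S(1) by auto
        have "sh (i j) = sh (i' j)" using tj True unfolding T_def by simp
        then show ?thesis using shinj[OF Pr[OF a(1) \<open>j < n\<close>] Pr[OF a(2) \<open>j < n\<close>]] by simp
      next
        case False
        then show ?thesis using tj unfolding T_def by simp
      qed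
    qed
  qed
  have TPeq: "T ` P = P" by (rule endo_inj_surj[OF finP TP Tinj])
  have pre: "S \<union> ({0..<n} - S) = {0..<n} \<and> S \<inter> ({0..<n} - S) = {} \<and> (\<forall>j\<in>S. Z j \<in> B) \<and> (\<forall>j\<in>{0..<n} - S. Z j \<in> C)"
    using S(1) ZB ZC by blast
  have ind': "phi_pi phit \<iota> n \<pi> Z = phi_pi phit \<iota> n \<pi>' Z"
    if "partition_on {0..<n} \<pi> \<and> partition_on {0..<n} \<pi>' \<and> restrict_part \<pi> S = restrict_part \<pi>' S
            \<and> restrict_part \<pi> ({0..<n} - S) = restrict_part \<pi>' ({0..<n} - S)" for \<pi> \<pi>'
    using ind[unfolded E_indep_alg_def, rule_format, OF pre that] .
  have FT: "F (T i) = \<omega> ^ card S * F i" if iP: "i \<in> P" for i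
  proof -
    have a1: "\<omega> ^ (T i j) = (if j \<in> S then \<omega> else 1) * \<omega> ^ (i j)" if "j \<in> {..<n}" for j
    proof (cases "j \<in> S")
      case True
      then show ?thesis using that iP Pr shw unfolding T_def by simp
    next
      case False
      then show ?thesis unfolding T_def by simp
    qed
    have "(\<Prod>j<n. \<omega> ^ (T i j)) = (\<Prod>j<n. (if j \<in> S then \<omega> else 1) * \<omega> ^ (i j))"
      by (rule prod.cong[OF refl]) (rule a1)
    also have "\<dots> = (\<Prod>j<n. (if j \<in> S then \<omega> else 1)) * (\<Prod>j<n. \<omega> ^ (i j))"
      by (rule prod.distrib)
    also have "(\<Prod>j<n. (if j \<in> S then \<omega> else 1)) = (\<Prod>j\<in>{..<n} \<inter> S. \<omega>)"
      by (rule prod.inter_restrict[symmetric]) simp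
    also have "{..<n} \<inter> S = S" using S(1) by auto
    finally have p: "(\<Prod>j<n. \<omega> ^ (T i j)) = \<omega> ^ card S * (\<Prod>j<n. \<omega> ^ (i j))" by simp
    have w: "phit (word \<iota> n (T i) Z) = phit (word \<iota> n i Z)"
    proof -
      have J: "{0..<n} - S \<subseteq> {0..<n}" by auto
      have r1: "restrict_part (kernel_part n (T i)) S = restrict_part (kernel_part n i) S"
        unfolding restrict_kernel[OF S(1)]
      proof (rule image_cong[OF refl])
        fix l assume l: "l \<in> S"
        have "(T i j = T i l) = (i j = i l)" if j: "j \<in> S" for j
        proof -
          have jl: "j < n" "l < n" using j l S(1) by auto
          have "T i j = sh (i j)" "T i l = sh (i l)" using j l unfolding T_def by simp_all
          then show ?thesis using shinj[OF Pr[OF iP jl(1)] Pr[OF iP jl(2)]] by auto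
        qed
        then show "{j \<in> S. T i j = T i l} = {j \<in> S. i j = i l}" by blast
      qed
      have r2: "restrict_part (kernel_part n (T i)) ({0..<n} - S) = restrict_part (kernel_part n i) ({0..<n} - S)"
        unfolding restrict_kernel[OF J]
      proof (rule image_cong[OF refl])
        fix l assume l: "l \<in> {0..<n} - S"
        have "(T i j = T i l) = (i j = i l)" if j: "j \<in> {0..<n} - S" for j
          using j l unfolding T_def by simp
        then show "{j \<in> {0..<n} - S. T i j = T i l} = {j \<in> {0..<n} - S. i j = i l}" by blast
      qed
      have "phi_pi phit \<iota> n (kernel_part n (T i)) Z = phi_pi phit \<iota> n (kernel_part n i) Z"
        by (rule ind') (intro conjI partition_kernel r1 r2)
      then show ?thesis unfolding phi_pi_kernel[OF ex] .
    qed
    show ?thesis unfolding F_def p w by simp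
  qed
  have "(\<Sum>i\<in>P. F i) = (\<Sum>i\<in>T ` P. F i)" unfolding TPeq ..
  also have "\<dots> = (\<Sum>i\<in>P. F (T i))" by (rule sum.reindex_cong[OF Tinj refl refl])
  also have "\<dots> = (\<Sum>i\<in>P. \<omega> ^ card S * F i)" by (rule sum.cong[OF refl]) (rule FT)
  also have "\<dots> = \<omega> ^ card S * (\<Sum>i\<in>P. F i)" by (rule sum_distrib_left[symmetric])
  finally have eq: "(1 - \<omega> ^ card S) * (\<Sum>i\<in>P. F i) = 0" by (simp add: algebra_simps)
  have "S \<subset> {0..<n}" using S(1,3) by blast
  then have "card S < n" using psubset_card_mono[of "{0..<n}" S] by simp
  moreover have "0 < card S" using S(1,2) by (simp add: card_gt_0_iff finite_subset)
  ultimately have "\<omega> ^ card S \<noteq> 1" using pr unfolding primitive_root_def by blast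
  then have "(\<Sum>i\<in>P. F i) = 0" using eq by simp
  then show ?thesis using main by simp
qed

lemma X_omega_add:
  assumes "exch_system phi phit \<iota>"
  shows "X_omega \<iota> n \<omega> (x + y) = X_omega \<iota> n \<omega> x + X_omega \<iota> n \<omega> y"
proof -
  have "\<iota> k (x + y) = \<iota> k x + \<iota> k y" for k
    using assms unfolding exch_system_def embedding_def by blast
  then show ?thesis unfolding X_omega_def by (simp add: scaleC_add_right sum.distrib)
qed

lemma in_subalg_gen: "x \<in> S \<Longrightarrow> x \<in> subalg_gen S"
  unfolding subalg_gen_def by blast

theorem corollary2p3:
  fixes phi :: "'a::complex_algebra_1 \<Rightarrow> complex"
    and phit :: "'u::complex_algebra_1 \<Rightarrow> complex"
    and \<iota> :: "nat \<Rightarrow> 'a \<Rightarrow> 'u"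
    and X Y :: "nat \<Rightarrow> 'a" and n :: nat and \<omega> :: complex
  assumes "exch_system phi phit \<iota>"
    and "E_indep_fam phit \<iota> n X Y"
    and "primitive_root n \<omega>"
  shows "K phit \<iota> n \<omega> (\<lambda>j. X j + Y j) = K phit \<iota> n \<omega> X + K phit \<iota> n \<omega> Y"
proof -
  have nc: "ncps phit" using assms(1) unfolding exch_system_def by blast
  have npos: "0 < n" using assms(3) unfolding primitive_root_def by blast
  have ind: "E_indep_alg phit \<iota> (subalg_gen (X ` {0..<n})) (subalg_gen (Y ` {0..<n}))"
    using assms(2) unfolding E_indep_fam_def .
  define Xo where "Xo = X_omega \<iota> n \<omega>"
  define G where "G S = prod_list (map (\<lambda>j. if j \<in> S then Xo (X j) else Xo (Y j)) [0..<n])" for S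
  have m1: "map (\<lambda>j. X_omega \<iota> n \<omega> (X j + Y j)) [0..<n] = map (\<lambda>j. Xo (X j) + Xo (Y j)) [0..<n]"
    unfolding Xo_def X_omega_add[OF assms(1)] ..
  have "prod_list (map (\<lambda>j. X_omega \<iota> n \<omega> (X j + Y j)) [0..<n]) = (\<Sum>S\<in>Pow {0..<n}. G S)"
    unfolding m1 G_def by (rule prod_list_add_expand)
  then have kxy: "K phit \<iota> n \<omega> (\<lambda>j. X j + Y j) = 1 / of_nat n * (\<Sum>S\<in>Pow {0..<n}. phit (G S))"
    unfolding K_def by (simp add: ncps_sum[OF nc])
  have zero: "phit (G S) = 0" if S: "S \<in> Pow {0..<n} - {{0..<n}} - {{}}" for S
  proof -
    define Z where "Z j = (if j \<in> S then X j else Y j)" for j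
    have mm: "map (\<lambda>j. if j \<in> S then Xo (X j) else Xo (Y j)) [0..<n] = map (\<lambda>j. X_omega \<iota> n \<omega> (Z j)) [0..<n]"
      unfolding Z_def Xo_def by (rule map_cong[OF refl]) simp
    have g: "G S = prod_list (map (\<lambda>j. X_omega \<iota> n \<omega> (Z j)) [0..<n])"
      unfolding G_def using arg_cong[where f=prod_list, OF mm] .
    have s1: "S \<subseteq> {0..<n}" "S \<noteq> {}" "S \<noteq> {0..<n}" using S by auto
    have zb: "\<forall>j\<in>S. Z j \<in> subalg_gen (X ` {0..<n})"
    proof
      fix j assume j: "j \<in> S"
      then have "Z j = X j" "j \<in> {0..<n}" using s1(1) unfolding Z_def by auto
      then show "Z j \<in> subalg_gen (X ` {0..<n})" by (simp add: in_subalg_gen)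
    qed
    have zc: "\<forall>j\<in>{0..<n}-S. Z j \<in> subalg_gen (Y ` {0..<n})"
    proof
      fix j assume j: "j \<in> {0..<n}-S"
      then have "Z j = Y j" "j \<in> {0..<n}" unfolding Z_def by auto
      then show "Z j \<in> subalg_gen (Y ` {0..<n})" by (simp add: in_subalg_gen)
    qed
    show ?thesis unfolding g by (rule mixed_zero[OF assms(1) ind assms(3) s1 zb zc])
  qed
  have fin: "finite (Pow {0..<n})" by simp
  have "(\<Sum>S\<in>Pow {0..<n}. phit (G S)) = phit (G {0..<n}) + (\<Sum>S\<in>Pow {0..<n} - {{0..<n}}. phit (G S))"
    by (rule sum.remove[OF fin]) simp
  also have "(\<Sum>S\<in>Pow {0..<n} - {{0..<n}}. phit (G S)) = phit (G {}) + (\<Sum>S\<in>Pow {0..<n} - {{0..<n}} - {{}}. phit (G S))"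
    by (rule sum.remove) (use npos in auto)
  also have "(\<Sum>S\<in>Pow {0..<n} - {{0..<n}} - {{}}. phit (G S)) = 0"
    by (rule sum.neutral) (use zero in blast)
  finally have sm: "(\<Sum>S\<in>Pow {0..<n}. phit (G S)) = phit (G {0..<n}) + phit (G {})" by simp
  have gx: "G {0..<n} = prod_list (map (\<lambda>j. X_omega \<iota> n \<omega> (X j)) [0..<n])"
  proof -
    have mm: "map (\<lambda>j. if j \<in> {0..<n} then Xo (X j) else Xo (Y j)) [0..<n] = map (\<lambda>j. X_omega \<iota> n \<omega> (X j)) [0..<n]"
      unfolding Xo_def by (rule map_cong[OF refl]) simp
    show ?thesis unfolding G_def using arg_cong[where f=prod_list, OF mm] .
  qed
  have gy: "G {} = prod_list (map (\<lambda>j. X_omega \<iota> n \<omega> (Y j)) [0..<n])"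
    unfolding G_def Xo_def by simp
  have "K phit \<iota> n \<omega> (\<lambda>j. X j + Y j) = 1 / of_nat n * (phit (G {0..<n}) + phit (G {}))"
    unfolding kxy sm ..
  also have "\<dots> = K phit \<iota> n \<omega> X + K phit \<iota> n \<omega> Y"
    unfolding gx gy K_def by (simp add: distrib_left)
  finally show ?thesis .
qed

end
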